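(* Let $F$ be the distribution function of a random variable $X\ge0$ with $EX=\infty$ such that $F(0)=0$, $F(2)=0.4$, $F(4)=0.8$ and $F(3)<0.48$. Then $F\notin\mathcal{D}^-$.
   Context: For real random variables, $X \le_{st} Y$ means $P(X\le t)\ge P(Y\le t)$ for all $t\in\mathbb{R}$. A distribution function $F_X$ belongs to $\mathcal{D}^-$ if for every $n\in\mathbb{N}$, all $\theta_1,\dots,\theta_n\ge 0$ with $\sum_{i=1}^n\theta_i=1$, and i.i.d. random variables $X_1,\dots,X_n$ with distribution $F_X$, we have $X_1\le_{st}\sum_{i=1}^n\theta_iX_i$. *)

theory Defs
  imports "HOL-Probability.Probability"
begin

text \<open>Distribution of the weighted sum \<open>\<Sum>i=1..n. \<theta> i * X i\<close> of i.i.d. random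
  variables \<open>X 1, ..., X n\<close> with common law \<open>M\<close>: we model the i.i.d. family
  canonically on the product space \<open>PiM {1..n} (\<lambda>_. M)\<close>.\<close>

definition wsum_le_prob :: "real measure \<Rightarrow> nat \<Rightarrow> (nat \<Rightarrow> real) \<Rightarrow> real \<Rightarrow> real" where
  "wsum_le_prob M n \<theta> t =
     measure (PiM {1..n} (\<lambda>_. M))
       {x \<in> space (PiM {1..n} (\<lambda>_. M)). (\<Sum>i=1..n. \<theta> i * x i) \<le> t}"

text \<open>\<open>F \<in> D\<^sup>-\<close>, expressed for the law \<open>M\<close> with distribution function \<open>cdf M\<close>:
  \<open>X\<^sub>1 \<le>\<^sub>s\<^sub>t \<Sum>\<theta>\<^sub>iX\<^sub>i\<close> means \<open>P(X\<^sub>1 \<le> t) \<ge> P(\<Sum>\<theta>\<^sub>iX\<^sub>i \<le> t)\<close> for all t.\<close>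

definition in_D_minus :: "real measure \<Rightarrow> bool" where
  "in_D_minus M \<longleftrightarrow>
     (\<forall>n::nat. n \<ge> 1 \<longrightarrow> (\<forall>\<theta>::nat \<Rightarrow> real.
        (\<forall>i\<in>{1..n}. \<theta> i \<ge> 0) \<and> (\<Sum>i=1..n. \<theta> i) = 1 \<longrightarrow>
        (\<forall>t::real. cdf M t \<ge> wsum_le_prob M n \<theta> t)))"

end

theory Submission
  imports Defs
begin

lemma pim2:
  assumes M: "prob_space M" and A1: "A 1 \<in> sets M" and A2: "A 2 \<in> sets M"
  shows "measure (PiM {1..2::nat} (\<lambda>_. M)) (Pi\<^sub>E {1..2} A) = measure M (A 1) * measure M (A 2)"
proof -
  interpret product_prob_space "\<lambda>_. M" "{1..2::nat}"
    using M by (simp add: product_prob_space_def product_prob_space_axioms_def product_sigma_finite_def prob_space_imp_sigma_finite)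
  have s: "\<And>i. i \<in> {1..2::nat} \<Longrightarrow> A i \<in> sets M"
  proof -
    fix i :: nat assume "i \<in> {1..2}"
    hence "i = 1 \<or> i = 2" by auto
    thus "A i \<in> sets M" using A1 A2 by auto
  qed
  have "emeasure (PiM {1..2::nat} (\<lambda>_. M)) (Pi\<^sub>E {1..2} A) = (\<Prod>i\<in>{1..2::nat}. emeasure M (A i))"
    by (rule emeasure_PiM) (auto intro: s)
  also have "\<dots> = emeasure M (A 1) * emeasure M (A 2)"
    by (simp add: numeral_2_eq_2)
  also have "\<dots> = ennreal (measure M (A 1) * measure M (A 2))"
    using finite_measure.emeasure_eq_measure[OF prob_space.finite_measure[OF M]]
    by (simp add: ennreal_mult)
  finally show ?thesis
    by (simp add: measure_def)
qed

theorem mainTheorem11: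
  fixes M :: "real measure"
  assumes "real_distribution M"
    and "AE x in M. x \<ge> 0"
    and "(\<integral>\<^sup>+ x. ennreal x \<partial>M) = \<infinity>"
    and "cdf M 0 = 0"
    and "cdf M 2 = 0.4"
    and "cdf M 4 = 0.8"
    and "cdf M 3 < 0.48"
  shows "\<not> in_D_minus M"
proof
  assume D: "in_D_minus M"
  interpret real_distribution M by fact
  have PM: "prob_space M" by (rule prob_space_axioms)
  define P where "P = PiM {1..2::nat} (\<lambda>_. M)"
  interpret P: prob_space P unfolding P_def
    by (intro prob_space_PiM) (auto simp: PM)
  define \<theta> :: "nat \<Rightarrow> real" where "\<theta> = (\<lambda>_. 1/2)"
  have "cdf M 3 \<ge> wsum_le_prob M 2 \<theta> 3"
    using D unfolding in_D_minus_def \<theta>_def by (auto simp: numeral_2_eq_2)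
  define S where "S = {x \<in> space P. (\<Sum>i=1..2. \<theta> i * x i) \<le> 3}"
  have wS: "wsum_le_prob M 2 \<theta> 3 = P.prob S"
    unfolding wsum_le_prob_def S_def P_def by simp
  define A where "A = Pi\<^sub>E {1..2::nat} (\<lambda>i. if i = 1 then {..2::real} else {..4})"
  define B where "B = Pi\<^sub>E {1..2::nat} (\<lambda>i. if i = 1 then {2<..4::real} else {..2})"
  have sp: "space P = Pi\<^sub>E {1..2::nat} (\<lambda>_. UNIV)"
    unfolding P_def by (simp add: space_PiM)
  have AS: "A \<subseteq> S" "B \<subseteq> S"
  proof -
    have "A \<subseteq> space P" "B \<subseteq> space P" unfolding A_def B_def sp by auto
    moreover have "x 1 \<le> 2 \<and> x 2 \<le> 4" if "x \<in> A" for x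
      using PiE_mem[OF that[unfolded A_def], of 1] PiE_mem[OF that[unfolded A_def], of 2] by auto
    moreover have "x 1 \<le> 4 \<and> x 2 \<le> 2" if "x \<in> B" for x
      using PiE_mem[OF that[unfolded B_def], of 1] PiE_mem[OF that[unfolded B_def], of 2] by auto
    moreover have "(\<Sum>i=1..2. \<theta> i * x i) = x 1 / 2 + x 2 / 2" for x :: "nat \<Rightarrow> real"
      unfolding \<theta>_def by (simp add: numeral_2_eq_2)
    ultimately show "A \<subseteq> S" "B \<subseteq> S" unfolding S_def by force+
  qed
  have Am: "A \<in> P.events" "B \<in> P.events"
    unfolding A_def B_def P_def by (auto intro!: sets_PiM_I_finite)
  have Sm: "S \<in> P.events"
    unfolding S_def P_def by measurable
  have AB: "B - A = B"
  proof -
    have "x \<notin> A" if "x \<in> B" for x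
    proof
      assume "x \<in> A"
      from PiE_mem[OF this[unfolded A_def], of 1] PiE_mem[OF that[unfolded B_def], of 1]
      show False by auto
    qed
    thus ?thesis by auto
  qed
  have c2: "measure M {..2} = 0.4" and c4: "measure M {..4} = 0.8"
    using assms(5,6) by (auto simp: cdf_def)
  have mA: "P.prob A = 0.32"
    unfolding A_def P_def by (subst pim2) (auto simp: PM c2 c4)
  have m24: "measure M {2<..4} = 0.4"
  proof -
    have "{2<..4::real} = {..4} - {..2}" by auto
    hence "measure M {2<..4} = measure M {..4} - measure M {..2}"
      by (simp add: finite_measure_Diff)
    thus ?thesis using assms(5,6) by (simp add: cdf_def)
  qed
  have mB: "P.prob B = 0.16"
    unfolding B_def P_def by (subst pim2) (auto simp: PM c2 m24)
  have "P.prob (A \<union> B) = 0.48"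
    using P.finite_measure_Union'[OF Am] AB mA mB by simp
  moreover have "P.prob (A \<union> B) \<le> P.prob S"
    using AS Sm by (intro P.finite_measure_mono) auto
  ultimately show False
    using wS \<open>cdf M 3 \<ge> _\<close> assms(7) by simp
qed

end
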